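(* Let $\mu_1,\mu_2,\mu_3\in\mathbb{R}$, $\sigma_1,\sigma_2,\sigma_3>0$ and $k>0$. Consider three stocks with positive prices $p_{it}$, $i=1,2,3$, at discrete times $t=0,1,2,\dots$, with deterministic equal initial log-prices $\log p_{10}=\log p_{20}=\log p_{30}$ and $$\log(p_{i,t+1})=\log(p_{it})+\mu_i+\delta_{i,t+1},$$ where all $\delta_{it}$ are independent with $\delta_{it}\sim N(0,\sigma_i^2)$. Define spreads $$\epsilon_{at}=\log(p_{2t})-\log(p_{1t})-(\mu_2-\mu_1)t,\qquad \epsilon_{bt}=\log(p_{3t})-\log(p_{1t})-(\mu_3-\mu_1)t,$$ with standard deviations $\sigma_a=\sqrt{t(\sigma_1^2+\sigma_2^2)}$ and $\sigma_b=\sqrt{t(\sigma_1^2+\sigma_3^2)}$, signals $$S_{at}=\mathbb{1}\{\epsilon_{at}\le -k\sigma_a\}-\mathbb{1}\{\epsilon_{at}\ge k\sigma_a\},\qquad S_{bt}=\mathbb{1}\{\epsilon_{bt}\le -k\sigma_b\}-\mathbb{1}\{\epsilon_{bt}\ge k\sigma_b\},$$ stock returns $r_{i,t+1}=p_{i,t+1}/p_{it}-1$, and pair returns $r_{a,t+1}=S_{at}(r_{2,t+1}-r_{1,t+1})$, $r_{b,t+1}=S_{bt}(r_{3,t+1}-r_{1,t+1})$. Let $(Z_a,Z_b)$ be zero-mean jointly normal with unit variances and correlation $\rho=\sigma_1^2/\sqrt{(\sigma_1^2+\sigma_2^2)(\sigma_1^2+\sigma_3^2)}$. Then for every $t\ge1$,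 $$\operatorname{Cov}(r_{a,t+1},r_{b,t+1})=2\Big(\mathbf{P}(Z_a\ge k,\,Z_b\ge k)-\mathbf{P}(Z_a\ge k,\,Z_b\le -k)\Big)\Big(e^{\mu_2+\mu_3+\sigma_2^2/2+\sigma_3^2/2}-e^{\mu_1+\mu_3+\sigma_1^2/2+\sigma_3^2/2}-e^{\mu_1+\mu_2+\sigma_1^2/2+\sigma_2^2/2}+e^{2\mu_1+2\sigma_1^2}\Big).$$
   Context: Pairs $a=$ (stock 1, stock 2) and $b=$ (stock 1, stock 3) are two non-cointegrated pairs sharing stock 1; each log-price follows an independent Gaussian random walk with drift. *)

theory Defs
  imports "HOL-Probability.Probability"
begin

definition cov :: "'a measure \<Rightarrow> ('a \<Rightarrow> real) \<Rightarrow> ('a \<Rightarrow> real) \<Rightarrow> real" where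
  "cov M X Y = integral\<^sup>L M (\<lambda>w. X w * Y w) - integral\<^sup>L M X * integral\<^sup>L M Y"

definition signal :: "real \<Rightarrow> real \<Rightarrow> real \<Rightarrow> real" where
  "signal k s eps = (if eps \<le> - k * s then 1 else 0) - (if eps \<ge> k * s then 1 else 0)"

definition bvn_density :: "real \<Rightarrow> real \<Rightarrow> real \<Rightarrow> real" where
  "bvn_density \<rho> x y =
     1 / (2 * pi * sqrt (1 - \<rho>\<^sup>2)) * exp (- (x\<^sup>2 - 2 * \<rho> * x * y + y\<^sup>2) / (2 * (1 - \<rho>\<^sup>2)))"

definition bvn :: "real \<Rightarrow> (real \<times> real) measure" where
  "bvn \<rho> = density lborel (\<lambda>z. ennreal (bvn_density \<rho> (fst z) (snd z)))"

end

theory Submission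
  imports Defs
begin



lemma nn_integral_normal_density: "s > 0 \<Longrightarrow> (\<integral>\<^sup>+x. ennreal (normal_density m s x) \<partial>lborel) = 1"
  by (subst nn_integral_eq_integral) auto

lemma gauss_nn:
  fixes A B C :: real assumes A: "A > 0"
  shows "(\<integral>\<^sup>+u. ennreal (exp (-(A*u\<^sup>2 + B*u + C))) \<partial>lborel) = ennreal (sqrt (pi/A) * exp (B\<^sup>2/(4*A) - C))"
proof -
  define s where "s = sqrt (1/(2*A))"
  define m where "m = -B/(2*A)"
  have s2: "s\<^sup>2 = 1/(2*A)" using A by (simp add: s_def)
  have spos: "s > 0" using A by (simp add: s_def)
  have sq: "sqrt (2 * pi * s\<^sup>2) = sqrt (pi/A)" using s2 by simp
  have pa: "sqrt (pi/A) > 0" using A by simp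
  have eq: "exp (-(A*u\<^sup>2 + B*u + C)) = sqrt(pi/A) * exp(B\<^sup>2/(4*A) - C) * normal_density m s u" for u
  proof -
    have "sqrt(pi/A) * exp(B\<^sup>2/(4*A) - C) * normal_density m s u
        = exp(B\<^sup>2/(4*A) - C) * exp (-(u - m)\<^sup>2/ (2 * s\<^sup>2))"
      unfolding normal_density_def sq using pa A by simp
    also have "\<dots> = exp (B\<^sup>2/(4*A) - C + -(u - m)\<^sup>2/ (2 * s\<^sup>2))" by (simp add: exp_add[symmetric])
    also have "B\<^sup>2/(4*A) - C + -(u - m)\<^sup>2/ (2 * s\<^sup>2) = -(A*u\<^sup>2 + B*u + C)"
      unfolding s2 m_def using A pa by (simp add: field_simps power2_eq_square)
    finally show ?thesis by simp
  qed
  have "(\<integral>\<^sup>+u. ennreal (exp (-(A*u\<^sup>2 + B*u + C))) \<partial>lborel)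
      = (\<integral>\<^sup>+u. ennreal (sqrt(pi/A) * exp(B\<^sup>2/(4*A) - C)) * ennreal (normal_density m s u) \<partial>lborel)"
    by (intro nn_integral_cong) (subst eq, subst ennreal_mult', use pa in auto)
  also have "\<dots> = ennreal (sqrt(pi/A) * exp(B\<^sup>2/(4*A) - C))"
    by (simp add: nn_integral_cmult nn_integral_normal_density spos)
  finally show ?thesis .
qed




lemma expo_id:
  fixes v1 v2 v3 sa sb x y :: real
  assumes "v1 > 0" "v2 > 0" "v3 > 0" "sa > 0" "sb > 0" "sa\<^sup>2 = v1 + v2" "sb\<^sup>2 = v1 + v3"
  defines "A \<equiv> 1/(2 * v1) + 1/(2 * v2) + 1/(2 * v3)"
    and "B \<equiv> sa * x/v2 + sb * y/v3" and "C \<equiv> sa\<^sup>2 * x\<^sup>2/(2 * v2) + sb\<^sup>2 * y\<^sup>2/(2 * v3)"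
    and "\<rho> \<equiv> v1/(sa * sb)"
  shows "B\<^sup>2/(4 * A) - C = -(x\<^sup>2 - 2 * \<rho> * x * y + y\<^sup>2)/(2 * (1-\<rho>\<^sup>2))"
proof -
  define P where "P = v1 * v2 + v1 * v3 + v2 * v3"
  have v2: "v2 = sa\<^sup>2 - v1" and v3: "v3 = sb\<^sup>2 - v1" using assms by auto
  have P: "P > 0" using assms by (simp add: add_pos_pos P_def)
  have PP: "P = sa\<^sup>2 * sb\<^sup>2 - v1\<^sup>2" unfolding P_def v2 v3 by (simp add: algebra_simps power2_eq_square)
  have r0: "1 - \<rho>\<^sup>2 = (sa\<^sup>2 * sb\<^sup>2 - v1\<^sup>2)/(sa\<^sup>2 * sb\<^sup>2)" using \<open>sa > 0\<close> \<open>sb > 0\<close>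
    unfolding \<rho>_def by (simp add: field_simps power2_eq_square)
  have r: "1 - \<rho>\<^sup>2 = P/(sa\<^sup>2 * sb\<^sup>2)" unfolding r0 PP ..
  have A: "A = P/(2 * v1 * v2 * v3)" using assms by (simp add: A_def P_def field_simps)
  have L: "B\<^sup>2/(4 * A) - C = (v1 * (sa * x * v3 + sb * y * v2)\<^sup>2 - P * (sa\<^sup>2 * x\<^sup>2 * v3 + sb\<^sup>2 * y\<^sup>2 * v2))/(2 * P * v2 * v3)"
    unfolding A B_def C_def using assms P by (simp add: field_simps power2_eq_square)
  have X: "(x\<^sup>2 - 2 * \<rho> * x * y + y\<^sup>2) * (sa\<^sup>2 * sb\<^sup>2) = sa\<^sup>2 * sb\<^sup>2 * x\<^sup>2 - 2 * v1 * sa * sb * x * y + sa\<^sup>2 * sb\<^sup>2 * y\<^sup>2"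
    unfolding \<rho>_def using \<open>sa > 0\<close> \<open>sb > 0\<close> by (simp add: field_simps power2_eq_square)
  have R0: "-(x\<^sup>2 - 2 * \<rho> * x * y + y\<^sup>2)/(2 * (1-\<rho>\<^sup>2)) = -((x\<^sup>2 - 2 * \<rho> * x * y + y\<^sup>2) * (sa\<^sup>2 * sb\<^sup>2))/(2 * P)"
    unfolding r using \<open>sa > 0\<close> \<open>sb > 0\<close> P by (simp add: field_simps)
  have R: "-(x\<^sup>2 - 2 * \<rho> * x * y + y\<^sup>2)/(2 * (1-\<rho>\<^sup>2)) = -(sa\<^sup>2 * sb\<^sup>2 * x\<^sup>2 - 2 * v1 * sa * sb * x * y + sa\<^sup>2 * sb\<^sup>2 * y\<^sup>2)/(2 * P)"
    unfolding R0 X ..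
  have key: "v1 * (sa * x * v3 + sb * y * v2)\<^sup>2 - P * (sa\<^sup>2 * x\<^sup>2 * v3 + sb\<^sup>2 * y\<^sup>2 * v2)
     = -(v2 * v3) * (sa\<^sup>2 * sb\<^sup>2 * x\<^sup>2 - 2 * v1 * sa * sb * x * y + sa\<^sup>2 * sb\<^sup>2 * y\<^sup>2)"
    unfolding P_def v2 v3 by algebra
  show ?thesis unfolding L R key using assms P by (simp add: field_simps)
qed



lemma pref_id:
  fixes v1 v2 v3 sa sb :: real
  assumes v1: "v1 > 0" and v2: "v2 > 0" and v3: "v3 > 0" and "sa > 0" "sb > 0" "sa\<^sup>2 = v1 + v2" "sb\<^sup>2 = v1 + v3"
  defines "A \<equiv> 1/(2 * v1) + 1/(2 * v2) + 1/(2 * v3)"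
    and "K \<equiv> sa * sb / (sqrt (2 * pi * v1) * sqrt (2 * pi * v2) * sqrt (2 * pi * v3))"
    and "\<rho> \<equiv> v1/(sa * sb)"
  shows "K * sqrt (pi / A) = 1 / (2 * pi * sqrt (1 - \<rho>\<^sup>2))"
proof -
  define P where "P = v1 * v2 + v1 * v3 + v2 * v3"
  have v2e: "v2 = sa\<^sup>2 - v1" and v3e: "v3 = sb\<^sup>2 - v1" using assms by auto
  have P: "P > 0" using assms by (simp add: add_pos_pos P_def)
  have PP: "P = sa\<^sup>2 * sb\<^sup>2 - v1\<^sup>2" unfolding P_def v2e v3e by (simp add: algebra_simps power2_eq_square)
  have r0: "1 - \<rho>\<^sup>2 = (sa\<^sup>2 * sb\<^sup>2 - v1\<^sup>2)/(sa\<^sup>2 * sb\<^sup>2)" using \<open>sa > 0\<close> \<open>sb > 0\<close>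
    unfolding \<rho>_def by (simp add: field_simps power2_eq_square)
  have r: "1 - \<rho>\<^sup>2 = P/(sa\<^sup>2 * sb\<^sup>2)" unfolding r0 PP ..
  have rpos: "1 - \<rho>\<^sup>2 > 0" unfolding r using P assms by simp
  have A: "A = P/(2 * v1 * v2 * v3)" using assms by (simp add: A_def P_def field_simps)
  have Apos: "A > 0" unfolding A using P assms by simp
  have Kpos: "K > 0" unfolding K_def using assms by simp
  have sq1: "(K * sqrt (pi / A))\<^sup>2 = sa\<^sup>2 * sb\<^sup>2 / (4 * pi\<^sup>2 * P)"
  proof -
    have "(K * sqrt (pi / A))\<^sup>2 = K\<^sup>2 * (pi / A)" using Apos by (simp add: power_mult_distrib)
    also have "K\<^sup>2 = sa\<^sup>2 * sb\<^sup>2 / ((2 * pi * v1) * (2 * pi * v2) * (2 * pi * v3))"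
      unfolding K_def using assms by (simp add: power_mult_distrib power_divide)
    finally show ?thesis unfolding A using v1 v2 v3 P by (simp add: field_simps power2_eq_square)
  qed
  have sq2: "(1 / (2 * pi * sqrt (1 - \<rho>\<^sup>2)))\<^sup>2 = sa\<^sup>2 * sb\<^sup>2 / (4 * pi\<^sup>2 * P)"
    using rpos unfolding power_divide power_mult_distrib real_sqrt_pow2[OF less_imp_le[OF rpos]] r
    using \<open>sa > 0\<close> \<open>sb > 0\<close> P by (simp add: field_simps power2_eq_square)
  show ?thesis
    by (rule power2_eq_imp_eq) (use sq1 sq2 Kpos Apos rpos in auto)
qed

lemma bvn_identity:
  fixes a1 a2 a3 x y :: real
  assumes a1: "a1 > 0" and a2: "a2 > 0" and a3: "a3 > 0"
    and sa_def: "sa = sqrt (a1\<^sup>2 + a2\<^sup>2)" and sb_def: "sb = sqrt (a1\<^sup>2 + a3\<^sup>2)" and \<rho>_def: "\<rho> = a1\<^sup>2 / (sa * sb)"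
  shows "(\<integral>\<^sup>+u. ennreal (normal_density 0 a1 u * (sa * normal_density 0 a2 (u + sa * x))
            * (sb * normal_density 0 a3 (u + sb * y))) \<partial>lborel) = ennreal (bvn_density \<rho> x y)"
proof -
  define v1 where "v1 = a1\<^sup>2"
  define v2 where "v2 = a2\<^sup>2"
  define v3 where "v3 = a3\<^sup>2"
  have v: "v1 > 0" "v2 > 0" "v3 > 0" using assms by (auto simp: v1_def v2_def v3_def)
  have s: "sa > 0" "sb > 0" "sa\<^sup>2 = v1 + v2" "sb\<^sup>2 = v1 + v3"
    using v by (auto simp: sa_def sb_def v1_def v2_def v3_def intro!: add_pos_pos)
  define A where "A = 1/(2 * v1) + 1/(2 * v2) + 1/(2 * v3)"
  define B where "B = sa * x/v2 + sb * y/v3"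
  define C where "C = sa\<^sup>2 * x\<^sup>2/(2 * v2) + sb\<^sup>2 * y\<^sup>2/(2 * v3)"
  define K where "K = sa * sb / (sqrt (2 * pi * v1) * sqrt (2 * pi * v2) * sqrt (2 * pi * v3))"
  have \<rho>: "\<rho> = v1/(sa * sb)" unfolding \<rho>_def v1_def ..
  have Apos: "A > 0" using v by (simp add: A_def add_pos_pos)
  have Kpos: "K > 0" using v s by (simp add: K_def)
  have pw: "normal_density 0 a1 u * (sa * normal_density 0 a2 (u + sa * x))
            * (sb * normal_density 0 a3 (u + sb * y)) = K * exp (-(A * u\<^sup>2 + B * u + C))" for u
  proof -
    have "normal_density 0 a1 u * (sa * normal_density 0 a2 (u + sa * x))
            * (sb * normal_density 0 a3 (u + sb * y))
        = K * (exp (-u\<^sup>2/(2 * v1)) * exp (-(u + sa * x)\<^sup>2/(2 * v2)) * exp (-(u + sb * y)\<^sup>2/(2 * v3)))"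
      unfolding normal_density_def K_def v1_def v2_def v3_def by simp
    also have "exp (-u\<^sup>2/(2 * v1)) * exp (-(u + sa * x)\<^sup>2/(2 * v2)) * exp (-(u + sb * y)\<^sup>2/(2 * v3))
       = exp (-u\<^sup>2/(2 * v1) + -(u + sa * x)\<^sup>2/(2 * v2) + -(u + sb * y)\<^sup>2/(2 * v3))"
      by (simp only: exp_add)
    also have "-u\<^sup>2/(2 * v1) + -(u + sa * x)\<^sup>2/(2 * v2) + -(u + sb * y)\<^sup>2/(2 * v3) = -(A * u\<^sup>2 + B * u + C)"
      unfolding A_def B_def C_def using v by (simp add: field_simps power2_eq_square)
    finally show ?thesis .
  qed
  have "(\<integral>\<^sup>+u. ennreal (normal_density 0 a1 u * (sa * normal_density 0 a2 (u + sa * x))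
            * (sb * normal_density 0 a3 (u + sb * y))) \<partial>lborel)
      = (\<integral>\<^sup>+u. ennreal K * ennreal (exp (-(A * u\<^sup>2 + B * u + C))) \<partial>lborel)"
    by (intro nn_integral_cong) (subst pw, subst ennreal_mult', use Kpos in auto)
  also have "\<dots> = ennreal K * ennreal (sqrt (pi/A) * exp (B\<^sup>2/(4*A) - C))"
    by (subst nn_integral_cmult) (measurable, simp only: gauss_nn[OF Apos])
  also have "\<dots> = ennreal ((K * sqrt (pi/A)) * exp (B\<^sup>2/(4*A) - C))"
    using Kpos Apos by (simp add: ennreal_mult'[symmetric] mult.assoc)
  also have "K * sqrt (pi/A) = 1 / (2 * pi * sqrt (1 - \<rho>\<^sup>2))"
    unfolding K_def A_def \<rho> by (rule pref_id) (use v s in auto)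
  also have "B\<^sup>2/(4*A) - C = -(x\<^sup>2 - 2 * \<rho> * x * y + y\<^sup>2)/(2 * (1-\<rho>\<^sup>2))"
    unfolding A_def B_def C_def \<rho> by (rule expo_id) (use v s in auto)
  finally show ?thesis unfolding bvn_density_def by simp
qed



lemma nn_integral_pair_lborel:
  fixes h :: "real \<times> real \<Rightarrow> ennreal"
  assumes [measurable]: "h \<in> borel_measurable (lborel \<Otimes>\<^sub>M lborel)"
  shows "(\<integral>\<^sup>+z. h z \<partial>lborel) = (\<integral>\<^sup>+x. \<integral>\<^sup>+y. h (x, y) \<partial>lborel \<partial>lborel)"
  by (subst lborel_prod[symmetric], subst lborel.nn_integral_fst[symmetric]) auto

lemma indep_var_lborel:
  assumes "prob_space M" "prob_space.indep_var M borel X borel Y"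
  shows "prob_space.indep_var M lborel X lborel Y"
proof -
  have e: "case_bool lborel lborel = (\<lambda>_. lborel)" "case_bool borel borel = (\<lambda>_. borel)"
    by (auto split: bool.split)
  show ?thesis using assms(2)
    unfolding prob_space.indep_var_def[OF assms(1)] prob_space.indep_vars_def2[OF assms(1)] e
    by simp
qed

context prob_space begin

lemma indep_var_distr_map:
  assumes ind: "indep_var S X T Y" and phi[measurable]: "\<phi> \<in> measurable S S'" and psi[measurable]: "\<psi> \<in> measurable T T'"
  shows "distr M S' (\<lambda>w. \<phi> (X w)) \<Otimes>\<^sub>M distr M T' (\<lambda>w. \<psi> (Y w)) = distr M (S' \<Otimes>\<^sub>M T') (\<lambda>w. (\<phi> (X w), \<psi> (Y w)))"
proof -
  have rv: "random_variable S X" "random_variable T Y"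
    using ind by (auto dest: indep_var_rv1 indep_var_rv2)
  note [measurable] = rv
  have eq: "distr M S X \<Otimes>\<^sub>M distr M T Y = distr M (S \<Otimes>\<^sub>M T) (\<lambda>x. (X x, Y x))"
    using ind by (simp add: indep_var_distribution_eq)
  interpret pY: prob_space "distr (distr M T Y) T' \<psi>"
    by (intro prob_space.prob_space_distr prob_space_distr) (auto simp: rv)
  have "distr M S' (\<lambda>w. \<phi> (X w)) \<Otimes>\<^sub>M distr M T' (\<lambda>w. \<psi> (Y w))
     = distr (distr M S X) S' \<phi> \<Otimes>\<^sub>M distr (distr M T Y) T' \<psi>"
    by (simp add: distr_distr comp_def)
  also have "\<dots> = distr (distr M S X \<Otimes>\<^sub>M distr M T Y) (S' \<Otimes>\<^sub>M T') (\<lambda>(x, y). (\<phi> x, \<psi> y))"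
    by (rule pair_measure_distr) (auto intro: pY.sigma_finite_measure_axioms)
  also have "\<dots> = distr M (S' \<Otimes>\<^sub>M T') (\<lambda>w. (\<phi> (X w), \<psi> (Y w)))"
    unfolding eq by (subst distr_distr) (auto simp: comp_def)
  finally show ?thesis .
qed

lemma triple_nn_integral:
  fixes U V W :: "'a \<Rightarrow> real" and f1 f2 f3 :: "real \<Rightarrow> real"
  assumes U: "distributed M lborel U f1" and V: "distributed M lborel V f2" and W: "distributed M lborel W f3"
    and f[measurable]: "f1 \<in> borel_measurable borel" "f2 \<in> borel_measurable borel" "f3 \<in> borel_measurable borel"
    and fnn: "\<And>x. f1 x \<ge> 0" "\<And>x. f2 x \<ge> 0" "\<And>x. f3 x \<ge> 0"
    and iUVW: "distr M lborel U \<Otimes>\<^sub>M distr M lborel (\<lambda>w. (V w, W w)) = distr M (lborel \<Otimes>\<^sub>M lborel) (\<lambda>w. (U w, (V w, W w)))"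
    and iVW: "indep_var borel V borel W"
    and G[measurable]: "G \<in> borel_measurable (borel :: (real \<times> real \<times> real) measure)"
  shows "(\<integral>\<^sup>+w. G (U w, V w, W w) \<partial>M) =
    (\<integral>\<^sup>+u. \<integral>\<^sup>+v. \<integral>\<^sup>+x. ennreal (f1 u * f2 v * f3 x) * G (u, v, x) \<partial>lborel \<partial>lborel \<partial>lborel)"
proof -
  have G'[measurable]: "G \<in> borel_measurable (lborel \<Otimes>\<^sub>M (lborel \<Otimes>\<^sub>M lborel))"
    using G by (simp add: lborel_prod)
  have VW: "distributed M (lborel \<Otimes>\<^sub>M lborel) (\<lambda>w. (V w, W w)) (\<lambda>(v, x). ennreal (f2 v) * ennreal (f3 x))"
    by (rule distributed_joint_indep[OF _ _ V W indep_var_lborel[OF prob_space_axioms iVW]])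
       (auto intro: lborel.sigma_finite_measure_axioms)
  then have VW': "distributed M lborel (\<lambda>w. (V w, W w)) (\<lambda>(v, x). ennreal (f2 v) * ennreal (f3 x))"
    by (simp add: lborel_prod)
  have UVW: "distributed M (lborel \<Otimes>\<^sub>M lborel) (\<lambda>w. (U w, (V w, W w)))
     (\<lambda>(u, z). ennreal (f1 u) * (case z of (v, x) \<Rightarrow> ennreal (f2 v) * ennreal (f3 x)))"
    by (rule distributed_joint_indep'[OF _ _ U VW' iUVW])
       (auto intro: lborel.sigma_finite_measure_axioms)
  have "(\<integral>\<^sup>+w. G (U w, V w, W w) \<partial>M) = (\<integral>\<^sup>+q. (\<lambda>(u, z). ennreal (f1 u) * (case z of (v, x) \<Rightarrow> ennreal (f2 v) * ennreal (f3 x))) q * G q \<partial>(lborel \<Otimes>\<^sub>M lborel))"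
    by (subst distributed_nn_integral[OF UVW]) (auto simp: lborel_prod)
  also have "\<dots> = (\<integral>\<^sup>+u. \<integral>\<^sup>+z. ennreal (f1 u) * (case z of (v, x) \<Rightarrow> ennreal (f2 v) * ennreal (f3 x)) * G (u, z) \<partial>lborel \<partial>lborel)"
    by (subst lborel.nn_integral_fst[symmetric]) (simp only: lborel_prod[symmetric], measurable)
  also have "\<dots> = (\<integral>\<^sup>+u. \<integral>\<^sup>+v. \<integral>\<^sup>+x. ennreal (f1 u * f2 v * f3 x) * G (u, v, x) \<partial>lborel \<partial>lborel \<partial>lborel)"
  proof (intro nn_integral_cong)
    fix u
    show "(\<integral>\<^sup>+z. ennreal (f1 u) * (case z of (v, x) \<Rightarrow> ennreal (f2 v) * ennreal (f3 x)) * G (u, z) \<partial>lborel)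
      = (\<integral>\<^sup>+v. \<integral>\<^sup>+x. ennreal (f1 u * f2 v * f3 x) * G (u, v, x) \<partial>lborel \<partial>lborel)"
      by (subst nn_integral_pair_lborel, measurable) (auto simp: ennreal_mult' fnn mult.assoc intro!: nn_integral_cong)
  qed
  finally show ?thesis .
qed

end



lemma bvn_transform:
  fixes a1 a2 a3 sa sb \<rho> :: real and g :: "real \<times> real \<Rightarrow> ennreal"
  assumes a1: "a1 > 0" and a2: "a2 > 0" and a3: "a3 > 0"
    and sa_def: "sa = sqrt (a1\<^sup>2 + a2\<^sup>2)" and sb_def: "sb = sqrt (a1\<^sup>2 + a3\<^sup>2)" and \<rho>_def: "\<rho> = a1\<^sup>2 / (sa * sb)"
    and g[measurable]: "g \<in> borel_measurable (lborel \<Otimes>\<^sub>M lborel)"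
  shows "(\<integral>\<^sup>+u. \<integral>\<^sup>+v. \<integral>\<^sup>+x. ennreal (normal_density 0 a1 u * normal_density 0 a2 v * normal_density 0 a3 x)
             * g ((v - u) / sa, (x - u) / sb) \<partial>lborel \<partial>lborel \<partial>lborel)
       = (\<integral>\<^sup>+z. ennreal (bvn_density \<rho> (fst z) (snd z)) * g z \<partial>lborel)"
proof -
  let ?f1 = "normal_density 0 a1" and ?f2 = "normal_density 0 a2" and ?f3 = "normal_density 0 a3"
  have sa: "sa > 0" and sb: "sb > 0" using assms by (auto simp: sa_def sb_def intro!: add_pos_pos)
  define K where "K u p q = ennreal (?f1 u * (sa * ?f2 (u + sa * p)) * (sb * ?f3 (u + sb * q))) * g (p, q)" for u p q
  have K_meas[measurable]: "(\<lambda>(u, p, q). K u p q) \<in> borel_measurable (lborel \<Otimes>\<^sub>M (lborel \<Otimes>\<^sub>M lborel))"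
    unfolding K_def by measurable
  have step_a: "(\<integral>\<^sup>+v. \<integral>\<^sup>+x. ennreal (?f1 u * ?f2 v * ?f3 x) * g ((v - u) / sa, (x - u) / sb) \<partial>lborel \<partial>lborel)
      = (\<integral>\<^sup>+p. \<integral>\<^sup>+q. K u p q \<partial>lborel \<partial>lborel)" for u
  proof -
    have inner: "(\<integral>\<^sup>+x. ennreal (?f1 u * ?f2 v * ?f3 x) * g ((v - u) / sa, (x - u) / sb) \<partial>lborel)
        = (\<integral>\<^sup>+q. ennreal (?f1 u * ?f2 v * (sb * ?f3 (u + sb * q))) * g ((v - u) / sa, q) \<partial>lborel)" for v
    proof -
      have "(\<integral>\<^sup>+x. ennreal (?f1 u * ?f2 v * ?f3 x) * g ((v - u) / sa, (x - u) / sb) \<partial>lborel)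
          = ennreal sb * (\<integral>\<^sup>+q. ennreal (?f1 u * ?f2 v * ?f3 (u + sb * q)) * g ((v - u) / sa, (u + sb * q - u) / sb) \<partial>lborel)"
        using sb by (subst nn_integral_real_affine[where c = sb and t = u]) auto
      also have "\<dots> = (\<integral>\<^sup>+q. ennreal sb * (ennreal (?f1 u * ?f2 v * ?f3 (u + sb * q)) * g ((v - u) / sa, (u + sb * q - u) / sb)) \<partial>lborel)"
        by (subst nn_integral_cmult) auto
      also have "\<dots> = (\<integral>\<^sup>+q. ennreal (?f1 u * ?f2 v * (sb * ?f3 (u + sb * q))) * g ((v - u) / sa, q) \<partial>lborel)"
        using sb by (intro nn_integral_cong) (simp add: ennreal_mult mult_ac)
      finally show ?thesis .
    qed
    have "(\<integral>\<^sup>+v. \<integral>\<^sup>+x. ennreal (?f1 u * ?f2 v * ?f3 x) * g ((v - u) / sa, (x - u) / sb) \<partial>lborel \<partial>lborel)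
        = (\<integral>\<^sup>+v. \<integral>\<^sup>+q. ennreal (?f1 u * ?f2 v * (sb * ?f3 (u + sb * q))) * g ((v - u) / sa, q) \<partial>lborel \<partial>lborel)"
      by (simp add: inner)
    also have "\<dots> = ennreal sa * (\<integral>\<^sup>+p. \<integral>\<^sup>+q. ennreal (?f1 u * ?f2 (u + sa * p) * (sb * ?f3 (u + sb * q))) * g ((u + sa * p - u) / sa, q) \<partial>lborel \<partial>lborel)"
      using sa by (subst nn_integral_real_affine[where c = sa and t = u]) auto
    also have "\<dots> = (\<integral>\<^sup>+p. ennreal sa * \<integral>\<^sup>+q. ennreal (?f1 u * ?f2 (u + sa * p) * (sb * ?f3 (u + sb * q))) * g ((u + sa * p - u) / sa, q) \<partial>lborel \<partial>lborel)"
      by (subst nn_integral_cmult) auto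
    also have "\<dots> = (\<integral>\<^sup>+p. \<integral>\<^sup>+q. ennreal sa * (ennreal (?f1 u * ?f2 (u + sa * p) * (sb * ?f3 (u + sb * q))) * g ((u + sa * p - u) / sa, q)) \<partial>lborel \<partial>lborel)"
      by (intro nn_integral_cong, subst nn_integral_cmult) auto
    also have "\<dots> = (\<integral>\<^sup>+p. \<integral>\<^sup>+q. K u p q \<partial>lborel \<partial>lborel)"
      using sa sb unfolding K_def by (intro nn_integral_cong) (simp add: ennreal_mult mult_ac)
    finally show ?thesis .
  qed
  have step_b: "(\<integral>\<^sup>+u. \<integral>\<^sup>+p. \<integral>\<^sup>+q. K u p q \<partial>lborel \<partial>lborel \<partial>lborel)
      = (\<integral>\<^sup>+p. \<integral>\<^sup>+q. \<integral>\<^sup>+u. K u p q \<partial>lborel \<partial>lborel \<partial>lborel)"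
  proof -
    have "(\<integral>\<^sup>+u. \<integral>\<^sup>+p. \<integral>\<^sup>+q. K u p q \<partial>lborel \<partial>lborel \<partial>lborel)
       = (\<integral>\<^sup>+p. \<integral>\<^sup>+u. \<integral>\<^sup>+q. K u p q \<partial>lborel \<partial>lborel \<partial>lborel)"
      by (rule lborel_pair.Fubini'[of "\<lambda>p u. \<integral>\<^sup>+q. K u p q \<partial>lborel"]) (unfold K_def, measurable)
    also have "\<dots> = (\<integral>\<^sup>+p. \<integral>\<^sup>+q. \<integral>\<^sup>+u. K u p q \<partial>lborel \<partial>lborel \<partial>lborel)"
      by (intro nn_integral_cong lborel_pair.Fubini'[of "\<lambda>q u. K u _ q"]) (unfold K_def, measurable)
    finally show ?thesis .
  qed
  have step_c: "(\<integral>\<^sup>+u. K u p q \<partial>lborel) = ennreal (bvn_density \<rho> p q) * g (p, q)" for p q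
  proof -
    have "(\<integral>\<^sup>+u. K u p q \<partial>lborel) = (\<integral>\<^sup>+u. ennreal (?f1 u * (sa * ?f2 (u + sa * p)) * (sb * ?f3 (u + sb * q))) \<partial>lborel) * g (p, q)"
      unfolding K_def by (rule nn_integral_multc) measurable
    also have "(\<integral>\<^sup>+u. ennreal (?f1 u * (sa * ?f2 (u + sa * p)) * (sb * ?f3 (u + sb * q))) \<partial>lborel) = ennreal (bvn_density \<rho> p q)"
      by (rule bvn_identity[OF a1 a2 a3 sa_def sb_def \<rho>_def])
    finally show ?thesis .
  qed
  have "(\<integral>\<^sup>+u. \<integral>\<^sup>+v. \<integral>\<^sup>+x. ennreal (?f1 u * ?f2 v * ?f3 x) * g ((v - u) / sa, (x - u) / sb) \<partial>lborel \<partial>lborel \<partial>lborel)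
     = (\<integral>\<^sup>+u. \<integral>\<^sup>+p. \<integral>\<^sup>+q. K u p q \<partial>lborel \<partial>lborel \<partial>lborel)"
    by (simp add: step_a)
  also have "\<dots> = (\<integral>\<^sup>+p. \<integral>\<^sup>+q. ennreal (bvn_density \<rho> p q) * g (p, q) \<partial>lborel \<partial>lborel)"
    by (simp add: step_b step_c)
  also have "\<dots> = (\<integral>\<^sup>+z. ennreal (bvn_density \<rho> (fst z) (snd z)) * g z \<partial>lborel)"
    by (subst nn_integral_pair_lborel) (auto simp: bvn_density_def)
  finally show ?thesis .
qed




lemma bvn_meas[measurable]: "(\<lambda>z. bvn_density \<rho> (fst z) (snd z)) \<in> borel_measurable (borel :: (real \<times> real) measure)"
proof -
  have "(\<lambda>z. bvn_density \<rho> (fst z) (snd z)) \<in> borel_measurable (lborel \<Otimes>\<^sub>M lborel :: (real \<times> real) measure)"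
    unfolding bvn_density_def by measurable
  then show ?thesis by (simp add: lborel_prod)
qed

context prob_space begin

lemma bvn_distr:
  fixes U V W :: "'a \<Rightarrow> real"
  assumes a1: "a1 > 0" and a2: "a2 > 0" and a3: "a3 > 0"
    and sa_def: "sa = sqrt (a1\<^sup>2 + a2\<^sup>2)" and sb_def: "sb = sqrt (a1\<^sup>2 + a3\<^sup>2)" and \<rho>_def: "\<rho> = a1\<^sup>2 / (sa * sb)"
    and U: "distributed M lborel U (normal_density 0 a1)"
    and V: "distributed M lborel V (normal_density 0 a2)"
    and W: "distributed M lborel W (normal_density 0 a3)"
    and iUVW: "distr M lborel U \<Otimes>\<^sub>M distr M lborel (\<lambda>w. (V w, W w)) = distr M (lborel \<Otimes>\<^sub>M lborel) (\<lambda>w. (U w, (V w, W w)))"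
    and iVW: "indep_var borel V borel W"
  shows "distr M lborel (\<lambda>w. ((V w - U w) / sa, (W w - U w) / sb)) = bvn \<rho>"
proof (rule measure_eqI)
  have [measurable]: "U \<in> borel_measurable M" "V \<in> borel_measurable M" "W \<in> borel_measurable M"
    using U V W by (auto dest: distributed_measurable)
  show "sets (distr M lborel (\<lambda>w. ((V w - U w) / sa, (W w - U w) / sb))) = sets (bvn \<rho>)"
    by (simp add: bvn_def)
  fix A assume "A \<in> sets (distr M lborel (\<lambda>w. ((V w - U w) / sa, (W w - U w) / sb)))"
  then have A[measurable]: "A \<in> sets borel" by simp
  have "emeasure (distr M lborel (\<lambda>w. ((V w - U w) / sa, (W w - U w) / sb))) A
      = (\<integral>\<^sup>+w. indicator A ((V w - U w) / sa, (W w - U w) / sb) \<partial>M)"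
    apply (subst emeasure_distr, measurable)
    apply (subst nn_integral_indicator[symmetric], measurable)
    apply (intro nn_integral_cong)
    apply (simp add: indicator_def)
    done
  also have "\<dots> = (\<integral>\<^sup>+w. (\<lambda>(u, v, x). indicator A ((v - u) / sa, (x - u) / sb)) (U w, V w, W w) \<partial>M)"
    by simp
  also have "\<dots> = (\<integral>\<^sup>+u. \<integral>\<^sup>+v. \<integral>\<^sup>+x. ennreal (normal_density 0 a1 u * normal_density 0 a2 v * normal_density 0 a3 x)
      * (\<lambda>(u, v, x). indicator A ((v - u) / sa, (x - u) / sb)) (u, v, x) \<partial>lborel \<partial>lborel \<partial>lborel)"
  proof (rule triple_nn_integral[OF U V W _ _ _ _ _ _ iUVW iVW])
    have "(\<lambda>(u, v, x). indicator A ((v - u) / sa, (x - u) / sb) :: ennreal) \<in> borel_measurable (lborel \<Otimes>\<^sub>M (lborel \<Otimes>\<^sub>M lborel))"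
      by measurable
    then show "(\<lambda>(u, v, x). indicator A ((v - u) / sa, (x - u) / sb) :: ennreal) \<in> borel_measurable borel"
      by (simp add: lborel_prod)
  qed simp_all
  also have "\<dots> = (\<integral>\<^sup>+z. ennreal (bvn_density \<rho> (fst z) (snd z)) * indicator A z \<partial>lborel)"
  proof -
    have "indicator A \<in> borel_measurable (lborel \<Otimes>\<^sub>M lborel :: (real \<times> real) measure)"
      by (simp add: lborel_prod)
    from bvn_transform[OF a1 a2 a3 sa_def sb_def \<rho>_def this] show ?thesis by simp
  qed
  also have "\<dots> = emeasure (bvn \<rho>) A"
    unfolding bvn_def by (subst emeasure_density) auto
  finally show "emeasure (distr M lborel (\<lambda>w. ((V w - U w) / sa, (W w - U w) / sb))) A = emeasure (bvn \<rho>) A" .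
qed

end



lemma nn_integral_neg2:
  fixes h :: "real \<times> real \<Rightarrow> ennreal"
  assumes [measurable]: "h \<in> borel_measurable (lborel \<Otimes>\<^sub>M lborel)"
  shows "(\<integral>\<^sup>+x. \<integral>\<^sup>+y. h (x, y) \<partial>lborel \<partial>lborel) = (\<integral>\<^sup>+x. \<integral>\<^sup>+y. h (-x, -y) \<partial>lborel \<partial>lborel)"
proof -
  have "(\<integral>\<^sup>+x. \<integral>\<^sup>+y. h (x, y) \<partial>lborel \<partial>lborel) = (\<integral>\<^sup>+x. \<integral>\<^sup>+y. h (-x, y) \<partial>lborel \<partial>lborel)"
    by (subst nn_integral_real_affine[where c = "-1" and t = 0]) auto
  also have "\<dots> = (\<integral>\<^sup>+x. \<integral>\<^sup>+y. h (-x, -y) \<partial>lborel \<partial>lborel)"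
  proof -
    have aux: "(\<integral>\<^sup>+y. h (-x, y) \<partial>lborel) = (\<integral>\<^sup>+y. h (-x, -y) \<partial>lborel)" for x
      by (subst nn_integral_real_affine[where c = "-1" and t = 0]) auto
    show ?thesis by (rule nn_integral_cong) (rule aux)
  qed
  finally show ?thesis .
qed

lemma bvn_meas'[measurable]: "(\<lambda>z. bvn_density \<rho> (fst z) (snd z)) \<in> borel_measurable (lborel \<Otimes>\<^sub>M lborel :: (real \<times> real) measure)"
  unfolding bvn_density_def by measurable

lemma bvn_density_neg: "bvn_density \<rho> (-x) (-y) = bvn_density \<rho> x y"
  unfolding bvn_density_def by simp

lemma bvn_sym:
  fixes A B :: "real set"
  assumes [measurable]: "A \<in> sets borel" "B \<in> sets borel"
  shows "emeasure (bvn \<rho>) (A \<times> B) = emeasure (bvn \<rho>) ({x. -x \<in> A} \<times> {y. -y \<in> B})"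
proof -
  have em: "emeasure (bvn \<rho>) (C \<times> D) = (\<integral>\<^sup>+x. \<integral>\<^sup>+y. ennreal (bvn_density \<rho> x y) * indicator C x * indicator D y \<partial>lborel \<partial>lborel)"
    if [measurable]: "C \<in> sets borel" "D \<in> sets borel" for C D :: "real set"
  proof -
    have "C \<times> D \<in> sets (borel \<Otimes>\<^sub>M borel)" by (rule pair_measureI) auto
    then have CD[measurable]: "C \<times> D \<in> sets borel" by (subst (asm) borel_prod)
    have "emeasure (bvn \<rho>) (C \<times> D) = (\<integral>\<^sup>+z. ennreal (bvn_density \<rho> (fst z) (snd z)) * indicator (C \<times> D) z \<partial>lborel)"
      unfolding bvn_def using CD by (subst emeasure_density) auto
    also have "\<dots> = (\<integral>\<^sup>+x. \<integral>\<^sup>+y. ennreal (bvn_density \<rho> x y) * indicator (C \<times> D) (x, y) \<partial>lborel \<partial>lborel)"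
      by (subst nn_integral_pair_lborel) (auto simp: lborel_prod)
    finally show ?thesis by (simp add: indicator_times mult.assoc)
  qed
  have "emeasure (bvn \<rho>) (A \<times> B) = (\<integral>\<^sup>+x. \<integral>\<^sup>+y. ennreal (bvn_density \<rho> x y) * indicator A x * indicator B y \<partial>lborel \<partial>lborel)"
    by (rule em) auto
  also have "\<dots> = (\<integral>\<^sup>+x. \<integral>\<^sup>+y. (\<lambda>(x,y). ennreal (bvn_density \<rho> x y) * indicator A x * indicator B y) (x, y) \<partial>lborel \<partial>lborel)"
    by simp
  also have "\<dots> = (\<integral>\<^sup>+x. \<integral>\<^sup>+y. (\<lambda>(x,y). ennreal (bvn_density \<rho> x y) * indicator A x * indicator B y) (-x, -y) \<partial>lborel \<partial>lborel)"
  proof (rule nn_integral_neg2)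
    have "(\<lambda>z. ennreal (bvn_density \<rho> (fst z) (snd z)) * indicator A (fst z) * indicator B (snd z)) \<in> borel_measurable (lborel \<Otimes>\<^sub>M lborel :: (real \<times> real) measure)"
      by measurable
    then show "(\<lambda>(x,y). ennreal (bvn_density \<rho> x y) * indicator A x * indicator B y) \<in> borel_measurable (lborel \<Otimes>\<^sub>M lborel)"
      by (simp add: case_prod_beta')
  qed
  also have "\<dots> = (\<integral>\<^sup>+x. \<integral>\<^sup>+y. ennreal (bvn_density \<rho> x y) * indicator {x. -x \<in> A} x * indicator {y. -y \<in> B} y \<partial>lborel \<partial>lborel)"
    by (simp add: bvn_density_neg indicator_def)
  also have "\<dots> = emeasure (bvn \<rho>) ({x. -x \<in> A} \<times> {y. -y \<in> B})"
    by (rule em[symmetric]) auto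
  finally show ?thesis .
qed

definition sgk :: "real \<Rightarrow> real \<Rightarrow> real" where
  "sgk k x = (if x \<le> -k then 1 else 0) - (if x \<ge> k then 1 else 0)"

lemma bvn_measure_sym:
  fixes A B :: "real set"
  assumes "A \<in> sets borel" "B \<in> sets borel"
  shows "measure (bvn \<rho>) (A \<times> B) = measure (bvn \<rho>) ({x. -x \<in> A} \<times> {y. -y \<in> B})"
  unfolding measure_def using bvn_sym[OF assms] by simp

lemma bvn_signal:
  assumes P: "prob_space (bvn \<rho>)" and k: "k > 0"
  shows "(\<integral>z. sgk k (fst z) * sgk k (snd z) \<partial>bvn \<rho>) = 2 * (measure (bvn \<rho>) ({k..} \<times> {k..}) - measure (bvn \<rho>) ({k..} \<times> {..-k}))"
    and "(\<integral>z. sgk k (fst z) \<partial>bvn \<rho>) = 0"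
proof -
  interpret P: prob_space "bvn \<rho>" by (rule P)
  have sp: "space (bvn \<rho>) = UNIV" by (simp add: bvn_def)
  have sets: "sets (bvn \<rho>) = sets borel" by (simp add: bvn_def)
  have rect: "C \<times> D \<in> sets (bvn \<rho>)" if "C \<in> sets borel" "D \<in> sets borel" for C D :: "real set"
  proof -
    have "C \<times> D \<in> sets (borel \<Otimes>\<^sub>M borel)" by (rule pair_measureI) (use that in auto)
    then show ?thesis unfolding sets by (subst (asm) borel_prod)
  qed
  have int: "integrable (bvn \<rho>) (indicator (C \<times> D) :: _ \<Rightarrow> real)" if "C \<in> sets borel" "D \<in> sets borel" for C D :: "real set"
    using rect[OF that] by (intro integrable_real_indicator) (auto simp: P.emeasure_eq_measure)
  have ii: "(\<integral>z. indicator (C \<times> D) z \<partial>bvn \<rho>) = measure (bvn \<rho>) (C \<times> D)" for C D :: "real set"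
    by (simp add: sp)
  let ?L = "{..-k} :: real set" and ?R = "{k..} :: real set"
  have neg1: "{x. -x \<in> ?R} = ?L" and neg2: "{x. -x \<in> ?L} = ?R" by auto
  have e1: "measure (bvn \<rho>) (?L \<times> ?L) = measure (bvn \<rho>) (?R \<times> ?R)"
    using bvn_measure_sym[of ?R ?R \<rho>] unfolding neg1 by simp
  have e2: "measure (bvn \<rho>) (?L \<times> ?R) = measure (bvn \<rho>) (?R \<times> ?L)"
    using bvn_measure_sym[of ?R ?L \<rho>] unfolding neg1 neg2 by simp
  have e3: "measure (bvn \<rho>) (?L \<times> UNIV) = measure (bvn \<rho>) (?R \<times> UNIV)"
    using bvn_measure_sym[of ?R UNIV \<rho>] unfolding neg1 by simp
  have pw: "sgk k (fst z) * sgk k (snd z) = indicator (?L \<times> ?L) z - indicator (?L \<times> ?R) z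
      - indicator (?R \<times> ?L) z + indicator (?R \<times> ?R) z" for z
    using k by (cases z) (auto simp: sgk_def indicator_def)
  have "(\<integral>z. sgk k (fst z) * sgk k (snd z) \<partial>bvn \<rho>) = (\<integral>z. indicator (?L \<times> ?L) z - indicator (?L \<times> ?R) z
      - indicator (?R \<times> ?L) z + indicator (?R \<times> ?R) z \<partial>bvn \<rho>)"
    by (simp only: pw)
  also have "\<dots> = measure (bvn \<rho>) (?L \<times> ?L) - measure (bvn \<rho>) (?L \<times> ?R) - measure (bvn \<rho>) (?R \<times> ?L) + measure (bvn \<rho>) (?R \<times> ?R)"
    by (simp add: int ii sp)
  finally show "(\<integral>z. sgk k (fst z) * sgk k (snd z) \<partial>bvn \<rho>) = 2 * (measure (bvn \<rho>) ({k..} \<times> {k..}) - measure (bvn \<rho>) ({k..} \<times> {..-k}))"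
    using e1 e2 by simp
  have pw1: "sgk k (fst z) = indicator (?L \<times> UNIV) z - indicator (?R \<times> UNIV) z" for z
    using k by (cases z) (auto simp: sgk_def indicator_def)
  have "(\<integral>z. sgk k (fst z) \<partial>bvn \<rho>) = (\<integral>z. indicator (?L \<times> UNIV) z - indicator (?R \<times> UNIV) z \<partial>bvn \<rho>)"
    by (simp only: pw1)
  also have "\<dots> = 0" using e3 by (simp add: int ii sp)
  finally show "(\<integral>z. sgk k (fst z) \<partial>bvn \<rho>) = 0" .
qed




context prob_space begin

lemma lognormal:
  assumes D: "distributed M lborel X (normal_density 0 s)" and s: "s > 0"
  shows "integrable M (\<lambda>w. exp (a + b * X w))" and "(\<integral>w. exp (a + b * X w) \<partial>M) = exp (a + b\<^sup>2 * s\<^sup>2 / 2)"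
proof -
  have pw: "normal_density 0 s x * exp (a + b * x) = exp (a + b\<^sup>2 * s\<^sup>2 / 2) * normal_density (b * s\<^sup>2) s x" for x
  proof -
    have "normal_density 0 s x * exp (a + b * x) = 1 / sqrt (2 * pi * s\<^sup>2) * exp (-(x - 0)\<^sup>2 / (2 * s\<^sup>2) + (a + b * x))"
      unfolding normal_density_def exp_add by (simp only: mult.assoc)
    also have "-(x - 0)\<^sup>2 / (2 * s\<^sup>2) + (a + b * x) = (a + b\<^sup>2 * s\<^sup>2 / 2) + -(x - b * s\<^sup>2)\<^sup>2 / (2 * s\<^sup>2)"
      using s by (simp add: field_simps power2_eq_square)
    finally show ?thesis unfolding normal_density_def exp_add by (simp only: mult_ac)
  qed
  have i: "integrable lborel (\<lambda>x. normal_density 0 s x * exp (a + b * x))"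
    unfolding pw using s by simp
  have v: "(\<integral>x. normal_density 0 s x * exp (a + b * x) \<partial>lborel) = exp (a + b\<^sup>2 * s\<^sup>2 / 2)"
    unfolding pw using s by simp
  show "integrable M (\<lambda>w. exp (a + b * X w))"
    using i by (subst distributed_integrable[OF D, symmetric]) auto
  show "(\<integral>w. exp (a + b * X w) \<partial>M) = exp (a + b\<^sup>2 * s\<^sup>2 / 2)"
    using v by (subst distributed_integral[OF D, symmetric]) auto
qed

end




lemma cov_cong:
  assumes "\<And>w. w \<in> space M \<Longrightarrow> f w = f' w" "\<And>w. w \<in> space M \<Longrightarrow> g w = g' w"
  shows "cov M f g = cov M f' g'"
  unfolding cov_def using assms by (simp cong: Bochner_Integration.integral_cong)

lemma sum_restrict_eq: "(\<Sum>z\<in>S. restrict h A z) = (\<Sum>z\<in>S. h z)" if "S \<subseteq> A"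
  using that by (intro sum.cong) auto

lemma meas_sum_PiM[measurable (raw)]:
  "S \<subseteq> A \<Longrightarrow> (\<lambda>f. \<Sum>z\<in>S. f z :: real) \<in> borel_measurable (PiM A (\<lambda>_. borel))"
  by (rule borel_measurable_sum) (rule measurable_component_singleton, auto)

lemma sum_single: "(\<Sum>z\<in>{i}\<times>S. f z) = (\<Sum>s\<in>S. f (i, s))"
proof -
  have "{i}\<times>S = Pair i ` S" by auto
  then show ?thesis by (simp add: sum.reindex inj_on_def)
qed

theorem theorem4:
  fixes M :: "'a measure"
    and \<delta> :: "nat \<Rightarrow> nat \<Rightarrow> 'a \<Rightarrow> real"
    and p :: "nat \<Rightarrow> nat \<Rightarrow> 'a \<Rightarrow> real"
    and \<mu> \<sigma> :: "nat \<Rightarrow> real"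
    and k c :: real and t :: nat
  assumes "prob_space M"
    and sigma_pos: "\<And>i. i \<in> {1,2,3} \<Longrightarrow> \<sigma> i > 0"
    and "k > 0"
    and indep: "prob_space.indep_vars M (\<lambda>_. borel) (\<lambda>(i, s). \<delta> i s) ({1,2,3} \<times> {1..})"
    and normal: "\<And>i s. i \<in> {1,2,3} \<Longrightarrow> s \<ge> 1 \<Longrightarrow>
                   distributed M lborel (\<delta> i s) (\<lambda>x. ennreal (normal_density 0 (\<sigma> i) x))"
    and pos: "\<And>i s w. i \<in> {1,2,3} \<Longrightarrow> w \<in> space M \<Longrightarrow> p i s w > 0"
    and init: "\<And>i w. i \<in> {1,2,3} \<Longrightarrow> w \<in> space M \<Longrightarrow> ln (p i 0 w) = c"
    and step: "\<And>i s w. i \<in> {1,2,3} \<Longrightarrow> w \<in> space M \<Longrightarrow>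
                 ln (p i (Suc s) w) = ln (p i s w) + \<mu> i + \<delta> i (Suc s) w"
    and "t \<ge> 1"
  shows
    "let \<epsilon>a = (\<lambda>w. ln (p 2 t w) - ln (p 1 t w) - (\<mu> 2 - \<mu> 1) * real t);
         \<epsilon>b = (\<lambda>w. ln (p 3 t w) - ln (p 1 t w) - (\<mu> 3 - \<mu> 1) * real t);
         \<sigma>a = sqrt (real t * ((\<sigma> 1)\<^sup>2 + (\<sigma> 2)\<^sup>2));
         \<sigma>b = sqrt (real t * ((\<sigma> 1)\<^sup>2 + (\<sigma> 3)\<^sup>2));
         Sa = (\<lambda>w. signal k \<sigma>a (\<epsilon>a w));
         Sb = (\<lambda>w. signal k \<sigma>b (\<epsilon>b w));
         r = (\<lambda>i w. p i (t + 1) w / p i t w - 1);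
         ra = (\<lambda>w. Sa w * (r 2 w - r 1 w));
         rb = (\<lambda>w. Sb w * (r 3 w - r 1 w));
         \<rho> = (\<sigma> 1)\<^sup>2 / sqrt (((\<sigma> 1)\<^sup>2 + (\<sigma> 2)\<^sup>2) * ((\<sigma> 1)\<^sup>2 + (\<sigma> 3)\<^sup>2))
     in cov M ra rb =
        2 * (measure (bvn \<rho>) ({k..} \<times> {k..}) - measure (bvn \<rho>) ({k..} \<times> {..-k}))
          * (exp (\<mu> 2 + \<mu> 3 + (\<sigma> 2)\<^sup>2 / 2 + (\<sigma> 3)\<^sup>2 / 2)
             - exp (\<mu> 1 + \<mu> 3 + (\<sigma> 1)\<^sup>2 / 2 + (\<sigma> 3)\<^sup>2 / 2)
             - exp (\<mu> 1 + \<mu> 2 + (\<sigma> 1)\<^sup>2 / 2 + (\<sigma> 2)\<^sup>2 / 2)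
             + exp (2 * \<mu> 1 + 2 * (\<sigma> 1)\<^sup>2))"
proof -
  interpret prob_space M by fact
  note k = \<open>k > 0\<close> and t1 = \<open>t \<ge> 1\<close>
  define I0 where "I0 = (({1,2,3} \<times> {1..}) :: (nat \<times> nat) set)"
  define Z where "Z = (\<lambda>(i, s). \<delta> i s)"
  have Zind: "indep_vars (\<lambda>_. borel) Z I0" using indep unfolding Z_def I0_def .
  have dmeas[measurable]: "\<delta> i s \<in> borel_measurable M" if "i \<in> {1,2,3}" "s \<ge> 1" for i s
    using normal[OF that] by (auto dest: distributed_measurable)
  have sig: "\<sigma> 1 > 0" "\<sigma> 2 > 0" "\<sigma> 3 > 0" using sigma_pos by auto
  note sig_pos = sigma_pos
  have lnp: "ln (p i s w) = c + real s * \<mu> i + (\<Sum>j\<in>{1..s}. \<delta> i j w)" if "i \<in> {1,2,3}" "w \<in> space M" for i s w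
  proof (induction s)
    case 0 then show ?case using init[OF that] by simp
  next
    case (Suc s) then show ?case using step[OF that, of s] by (simp add: algebra_simps)
  qed
  define Us where "Us = (\<lambda>i w. \<Sum>z\<in>{i}\<times>{1..t}. Z z w)"
  have Us_eq: "Us i w = (\<Sum>j\<in>{1..t}. \<delta> i j w)" for i w
    unfolding Us_def sum_single Z_def by simp
  define D where "D = (\<lambda>i w. \<delta> i (Suc t) w)"
  define \<sigma>a where "\<sigma>a = sqrt (real t * ((\<sigma> 1)\<^sup>2 + (\<sigma> 2)\<^sup>2))"
  define \<sigma>b where "\<sigma>b = sqrt (real t * ((\<sigma> 1)\<^sup>2 + (\<sigma> 3)\<^sup>2))"
  have \<sigma>ab: "\<sigma>a > 0" "\<sigma>b > 0" using t1 sig unfolding \<sigma>a_def \<sigma>b_def by (auto intro!: mult_pos_pos add_pos_pos)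
  define Ga where "Ga = (\<lambda>w. sgk k ((Us 2 w - Us 1 w) / \<sigma>a))"
  define Gb where "Gb = (\<lambda>w. sgk k ((Us 3 w - Us 1 w) / \<sigma>b))"
  define R where "R = (\<lambda>i w. exp (\<mu> i + D i w))"
  have sig_eq: "signal k s e = sgk k (e / s)" if "s > 0" for s e
    unfolding signal_def sgk_def using that by (simp add: field_simps)
  have ret: "p i (t + 1) w / p i t w - 1 = R i w - 1" if "i \<in> {1,2,3}" "w \<in> space M" for i w
  proof -
    have "p i (t + 1) w / p i t w = exp (ln (p i (Suc t) w) - ln (p i t w))"
      using pos[OF that] by (simp add: exp_diff)
    also have "\<dots> = R i w" using step[OF that, of t] by (simp add: R_def D_def)
    finally show ?thesis by simp
  qed
  have eps: "ln (p j t w) - ln (p 1 t w) - (\<mu> j - \<mu> 1) * real t = Us j w - Us 1 w" if "j \<in> {1,2,3}" "w \<in> space M" for j w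
    using lnp[OF that, of t] lnp[of 1 w t] that by (simp add: Us_eq algebra_simps)
  have main: "cov M (\<lambda>w. Ga w * (R 2 w - R 1 w)) (\<lambda>w. Gb w * (R 3 w - R 1 w)) =
        2 * (measure (bvn ((\<sigma> 1)\<^sup>2 / sqrt (((\<sigma> 1)\<^sup>2 + (\<sigma> 2)\<^sup>2) * ((\<sigma> 1)\<^sup>2 + (\<sigma> 3)\<^sup>2)))) ({k..} \<times> {k..})
             - measure (bvn ((\<sigma> 1)\<^sup>2 / sqrt (((\<sigma> 1)\<^sup>2 + (\<sigma> 2)\<^sup>2) * ((\<sigma> 1)\<^sup>2 + (\<sigma> 3)\<^sup>2)))) ({k..} \<times> {..-k}))
          * (exp (\<mu> 2 + \<mu> 3 + (\<sigma> 2)\<^sup>2 / 2 + (\<sigma> 3)\<^sup>2 / 2)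
             - exp (\<mu> 1 + \<mu> 3 + (\<sigma> 1)\<^sup>2 / 2 + (\<sigma> 3)\<^sup>2 / 2)
             - exp (\<mu> 1 + \<mu> 2 + (\<sigma> 1)\<^sup>2 / 2 + (\<sigma> 2)\<^sup>2 / 2)
             + exp (2 * \<mu> 1 + 2 * (\<sigma> 1)\<^sup>2))"
  proof -
    have Zn: "distributed M lborel (Z z) (normal_density 0 (\<sigma> i))" if "z \<in> {i}\<times>{1..t}" "i \<in> {1,2,3}" for z i
      using normal[of i "snd z"] that by (auto simp: Z_def split: prod.splits)
    define a where "a = (\<lambda>i. sqrt (real t * (\<sigma> i)\<^sup>2))"
    have apos: "a i > 0" if "i \<in> {1,2,3}" for i using sig that t1 by (auto simp: a_def)
    have asq: "(a i)\<^sup>2 = real t * (\<sigma> i)\<^sup>2" for i by (simp add: a_def)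
    have Udist: "distributed M lborel (Us i) (normal_density 0 (a i))" if "i \<in> {1,2,3}" for i
    proof -
      have ind: "indep_vars (\<lambda>_. borel) Z ({i}\<times>{1..t})"
        by (rule indep_vars_subset[OF Zind]) (use that in \<open>auto simp: I0_def\<close>)
      have "distributed M lborel (\<lambda>x. \<Sum>z\<in>{i}\<times>{1..t}. Z z x)
         (normal_density (\<Sum>z\<in>{i}\<times>{1..t}. 0) (sqrt (\<Sum>z\<in>{i}\<times>{1..t}. (\<sigma> (fst z))\<^sup>2)))"
        by (rule sum_indep_normal[OF _ _ ind]) (use that t1 sig Zn in \<open>auto\<close>)
      moreover have "(\<Sum>z\<in>{i}\<times>{1..t}. (\<sigma> (fst z))\<^sup>2) = real t * (\<sigma> i)\<^sup>2" by (simp add: sum_single)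
      ultimately show ?thesis by (simp add: Us_def a_def)
    qed
    have Ddist: "distributed M lborel (D i) (normal_density 0 (\<sigma> i))" if "i \<in> {1,2,3}" for i
      using normal[OF that, of "Suc t"] by (simp add: D_def)
    have Umeas[measurable]: "Us 1 \<in> borel_measurable M" "Us 2 \<in> borel_measurable M" "Us 3 \<in> borel_measurable M"
      using Udist[of 1] Udist[of 2] Udist[of 3] by (auto dest: distributed_measurable)
    have Dmeas[measurable]: "D 1 \<in> borel_measurable M" "D 2 \<in> borel_measurable M" "D 3 \<in> borel_measurable M"
      using Ddist[of 1] Ddist[of 2] Ddist[of 3] by (auto dest: distributed_measurable)
    have restr: "indep_var (PiM A (\<lambda>_. borel)) (\<lambda>w. restrict (\<lambda>i. Z i w) A) (PiM B (\<lambda>_. borel)) (\<lambda>w. restrict (\<lambda>i. Z i w) B)"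
      if "A \<inter> B = {}" "A \<subseteq> I0" "B \<subseteq> I0" for A B
      using indep_var_restrict[OF Zind that] .
    have iUVW: "distr M lborel (Us 1) \<Otimes>\<^sub>M distr M lborel (\<lambda>w. (Us 2 w, Us 3 w)) = distr M (lborel \<Otimes>\<^sub>M lborel) (\<lambda>w. (Us 1 w, (Us 2 w, Us 3 w)))"
    proof -
      have m1: "(\<lambda>f. \<Sum>z\<in>{1::nat}\<times>{1..t}. f z :: real) \<in> measurable (PiM ({1}\<times>{1..t}) (\<lambda>_. borel)) lborel"
        by (simp add: meas_sum_PiM)
      have m2: "(\<lambda>f. (\<Sum>z\<in>{2::nat}\<times>{1..t}. f z :: real, \<Sum>z\<in>{3::nat}\<times>{1..t}. f z)) \<in> measurable (PiM ({2,3}\<times>{1..t}) (\<lambda>_. borel)) lborel"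
      proof -
        have "(\<lambda>f. \<Sum>z\<in>{2::nat}\<times>{1..t}. f z :: real) \<in> borel_measurable (PiM ({2,3}\<times>{1..t}) (\<lambda>_. borel))"
          by (rule meas_sum_PiM) auto
        moreover have "(\<lambda>f. \<Sum>z\<in>{3::nat}\<times>{1..t}. f z :: real) \<in> borel_measurable (PiM ({2,3}\<times>{1..t}) (\<lambda>_. borel))"
          by (rule meas_sum_PiM) auto
        ultimately show ?thesis by (simp add: borel_measurable_Pair)
      qed
      have "distr M lborel (\<lambda>w. \<Sum>z\<in>{1::nat}\<times>{1..t}. restrict (\<lambda>i. Z i w) ({1}\<times>{1..t}) z)
         \<Otimes>\<^sub>M distr M lborel (\<lambda>w. (\<Sum>z\<in>{2::nat}\<times>{1..t}. restrict (\<lambda>i. Z i w) ({2,3}\<times>{1..t}) z, \<Sum>z\<in>{3::nat}\<times>{1..t}. restrict (\<lambda>i. Z i w) ({2,3}\<times>{1..t}) z))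
         = distr M (lborel \<Otimes>\<^sub>M lborel) (\<lambda>w. (\<Sum>z\<in>{1::nat}\<times>{1..t}. restrict (\<lambda>i. Z i w) ({1}\<times>{1..t}) z,
              (\<Sum>z\<in>{2::nat}\<times>{1..t}. restrict (\<lambda>i. Z i w) ({2,3}\<times>{1..t}) z, \<Sum>z\<in>{3::nat}\<times>{1..t}. restrict (\<lambda>i. Z i w) ({2,3}\<times>{1..t}) z)))"
        by (rule indep_var_distr_map[OF restr m1 m2]) (auto simp: I0_def)
      moreover have "{1::nat}\<times>{1..t} \<subseteq> {1}\<times>{1..t}" "{2::nat}\<times>{1..t} \<subseteq> {2,3}\<times>{1..t}" "{3::nat}\<times>{1..t} \<subseteq> {2,3}\<times>{1..t}"
        by auto
      ultimately show ?thesis by (simp only: sum_restrict_eq Us_def)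
    qed
    have iVW: "indep_var borel (Us 2) borel (Us 3)"
    proof -
      have "indep_var borel (\<lambda>w. \<Sum>z\<in>{2::nat}\<times>{1..t}. restrict (\<lambda>i. Z i w) ({2}\<times>{1..t}) z)
                       borel (\<lambda>w. \<Sum>z\<in>{3::nat}\<times>{1..t}. restrict (\<lambda>i. Z i w) ({3}\<times>{1..t}) z)"
        by (rule indep_var_compose[unfolded comp_def, OF restr meas_sum_PiM meas_sum_PiM]) (auto simp: I0_def)
      moreover have "{2::nat}\<times>{1..t} \<subseteq> {2}\<times>{1..t}" "{3::nat}\<times>{1..t} \<subseteq> {3}\<times>{1..t}"
        by auto
      ultimately show ?thesis by (simp only: sum_restrict_eq Us_def)
    qed
    have iblock: "indep_var borel (\<lambda>w. Gf (Us 1 w, Us 2 w, Us 3 w)) borel (\<lambda>w. Hf (D 1 w, D 2 w, D 3 w))"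
      if Gf[measurable]: "Gf \<in> borel_measurable (borel :: (real \<times> real \<times> real) measure)"
        and Hf[measurable]: "Hf \<in> borel_measurable (borel :: (real \<times> real \<times> real) measure)" for Gf Hf
    proof -
      let ?A = "{1::nat,2,3}\<times>{1..t}" and ?B = "{1::nat,2,3}\<times>{Suc t}"
      have s1: "(\<lambda>f. \<Sum>z\<in>{i::nat}\<times>{1..t}. f z :: real) \<in> borel_measurable (PiM ?A (\<lambda>_. borel))" if "i \<in> {1,2,3}" for i
        by (rule meas_sum_PiM) (use that in auto)
      have mG: "(\<lambda>f. Gf (\<Sum>z\<in>{1::nat}\<times>{1..t}. f z, \<Sum>z\<in>{2::nat}\<times>{1..t}. f z, \<Sum>z\<in>{3::nat}\<times>{1..t}. f z))
          \<in> borel_measurable (PiM ?A (\<lambda>_. borel))"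
        using s1[of 1] s1[of 2] s1[of 3] by measurable
      have mH: "(\<lambda>f. Hf (f (1, Suc t), f (2, Suc t), f (3, Suc t))) \<in> borel_measurable (PiM ?B (\<lambda>_. borel))"
        by measurable
      have "indep_var borel (\<lambda>w. Gf (\<Sum>z\<in>{1::nat}\<times>{1..t}. restrict (\<lambda>i. Z i w) ?A z, \<Sum>z\<in>{2::nat}\<times>{1..t}. restrict (\<lambda>i. Z i w) ?A z, \<Sum>z\<in>{3::nat}\<times>{1..t}. restrict (\<lambda>i. Z i w) ?A z))
         borel (\<lambda>w. Hf (restrict (\<lambda>i. Z i w) ?B (1, Suc t), restrict (\<lambda>i. Z i w) ?B (2, Suc t), restrict (\<lambda>i. Z i w) ?B (3, Suc t)))"
        by (rule indep_var_compose[unfolded comp_def, OF restr mG mH]) (auto simp: I0_def)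
      moreover have "{1::nat}\<times>{1..t} \<subseteq> ?A" "{2::nat}\<times>{1..t} \<subseteq> ?A" "{3::nat}\<times>{1..t} \<subseteq> ?A"
        by auto
      ultimately show ?thesis by (simp only: sum_restrict_eq Us_def) (simp add: D_def Z_def)
    qed
    have iD: "indep_var borel (R i) borel (R j)" if "i \<in> {1,2,3}" "j \<in> {1,2,3}" "i \<noteq> j" for i j
    proof -
      have mi: "(\<lambda>f. exp (\<mu> i + f (i, Suc t))) \<in> borel_measurable (PiM {(i, Suc t)} (\<lambda>_. borel))" by measurable
      have mj: "(\<lambda>f. exp (\<mu> j + f (j, Suc t))) \<in> borel_measurable (PiM {(j, Suc t)} (\<lambda>_. borel))" by measurable
      have "indep_var borel (\<lambda>w. exp (\<mu> i + restrict (\<lambda>i. Z i w) {(i, Suc t)} (i, Suc t)))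
          borel (\<lambda>w. exp (\<mu> j + restrict (\<lambda>i. Z i w) {(j, Suc t)} (j, Suc t)))"
        by (rule indep_var_compose[unfolded comp_def, OF restr mi mj]) (use that in \<open>auto simp: I0_def\<close>)
      then show ?thesis by (simp add: R_def D_def Z_def)
    qed
    define \<rho> where "\<rho> = (\<sigma> 1)\<^sup>2 / sqrt (((\<sigma> 1)\<^sup>2 + (\<sigma> 2)\<^sup>2) * ((\<sigma> 1)\<^sup>2 + (\<sigma> 3)\<^sup>2))"
    have \<sigma>a_eq: "\<sigma>a = sqrt ((a 1)\<^sup>2 + (a 2)\<^sup>2)" unfolding \<sigma>a_def asq by (simp add: algebra_simps)
    have \<sigma>b_eq: "\<sigma>b = sqrt ((a 1)\<^sup>2 + (a 3)\<^sup>2)" unfolding \<sigma>b_def asq by (simp add: algebra_simps)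
    have \<rho>_eq: "\<rho> = (a 1)\<^sup>2 / (\<sigma>a * \<sigma>b)"
    proof -
      let ?X = "(\<sigma> 1)\<^sup>2 + (\<sigma> 2)\<^sup>2" and ?Y = "(\<sigma> 1)\<^sup>2 + (\<sigma> 3)\<^sup>2"
      have "\<sigma>a * \<sigma>b = sqrt ((real t)\<^sup>2 * (?X * ?Y))"
        unfolding \<sigma>a_def \<sigma>b_def real_sqrt_mult[symmetric] by (simp add: algebra_simps power2_eq_square)
      also have "\<dots> = real t * sqrt (?X * ?Y)" by (simp add: real_sqrt_mult)
      finally have e: "\<sigma>a * \<sigma>b = real t * sqrt (?X * ?Y)" .
      show ?thesis unfolding e asq \<rho>_def using t1 by simp
    qed
    have Zab: "distr M lborel (\<lambda>w. ((Us 2 w - Us 1 w) / \<sigma>a, (Us 3 w - Us 1 w) / \<sigma>b)) = bvn \<rho>"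
      by (rule bvn_distr[OF apos apos apos \<sigma>a_eq \<sigma>b_eq \<rho>_eq Udist Udist Udist iUVW iVW]) auto
    have Pb: "prob_space (bvn \<rho>)" unfolding Zab[symmetric] by (rule prob_space_distr) measurable
    have sgk_meas[measurable]: "sgk k \<in> borel_measurable borel" unfolding sgk_def[abs_def] by measurable
    have sgk_bound: "\<bar>sgk k x\<bar> \<le> 1" for x unfolding sgk_def by auto
    have Zmeas: "(\<lambda>w. ((Us 2 w - Us 1 w) / \<sigma>a, (Us 3 w - Us 1 w) / \<sigma>b)) \<in> measurable M lborel"
      by (simp only: measurable_lborel1) measurable
    have sg2: "(\<lambda>z. sgk k (fst z) * sgk k (snd z)) \<in> borel_measurable (lborel :: (real \<times> real) measure)"
    proof -
      have "(\<lambda>z. sgk k (fst z) * sgk k (snd z)) \<in> borel_measurable (lborel \<Otimes>\<^sub>M lborel :: (real \<times> real) measure)"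
        by measurable
      then show ?thesis by (simp add: lborel_prod)
    qed
    have sg1: "(\<lambda>z. sgk k (fst z)) \<in> borel_measurable (lborel :: (real \<times> real) measure)"
    proof -
      have "(\<lambda>z. sgk k (fst z)) \<in> borel_measurable (lborel \<Otimes>\<^sub>M lborel :: (real \<times> real) measure)"
        by measurable
      then show ?thesis by (simp add: lborel_prod)
    qed
    have EGG: "(\<integral>w. Ga w * Gb w \<partial>M) = 2 * (measure (bvn \<rho>) ({k..} \<times> {k..}) - measure (bvn \<rho>) ({k..} \<times> {..-k}))"
    proof -
      have "(\<integral>w. Ga w * Gb w \<partial>M) = (\<integral>z. sgk k (fst z) * sgk k (snd z) \<partial>distr M lborel (\<lambda>w. ((Us 2 w - Us 1 w) / \<sigma>a, (Us 3 w - Us 1 w) / \<sigma>b)))"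
        by (subst integral_distr[OF Zmeas sg2]) (simp add: Ga_def Gb_def)
      then show ?thesis unfolding Zab using bvn_signal(1)[OF Pb k] by simp
    qed
    have EGa: "(\<integral>w. Ga w \<partial>M) = 0"
    proof -
      have "(\<integral>w. Ga w \<partial>M) = (\<integral>z. sgk k (fst z) \<partial>distr M lborel (\<lambda>w. ((Us 2 w - Us 1 w) / \<sigma>a, (Us 3 w - Us 1 w) / \<sigma>b)))"
        by (subst integral_distr[OF Zmeas sg1]) (simp add: Ga_def)
      then show ?thesis unfolding Zab using bvn_signal(2)[OF Pb k] by simp
    qed
    have Ga_meas[measurable]: "Ga \<in> borel_measurable M" "Gb \<in> borel_measurable M" unfolding Ga_def Gb_def by measurable
    have intGa: "integrable M Ga" "integrable M Gb" "integrable M (\<lambda>w. Ga w * Gb w)"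
    proof -
      have m: "(\<lambda>w. Ga w * Gb w) \<in> borel_measurable M" by measurable
      have b: "\<bar>Ga w\<bar> \<le> 1" "\<bar>Gb w\<bar> \<le> 1" "\<bar>Ga w * Gb w\<bar> \<le> 1" for w
        using sgk_bound unfolding Ga_def Gb_def abs_mult by (auto intro: mult_le_one)
      show "integrable M Ga" "integrable M Gb" "integrable M (\<lambda>w. Ga w * Gb w)"
        by (intro integrable_const_bound[where B = 1] AE_I2 m Ga_meas; simp add: b)+
    qed
    have ER: "integrable M (R i)" "(\<integral>w. R i w \<partial>M) = exp (\<mu> i + (\<sigma> i)\<^sup>2 / 2)" if "i \<in> {1,2,3}" for i
      using lognormal[OF Ddist[OF that] sig_pos[OF that], of "\<mu> i" 1] by (simp_all add: R_def)
    have tri: "f \<in> borel_measurable (borel :: (real \<times> real \<times> real) measure)"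
      if "f \<in> borel_measurable (lborel \<Otimes>\<^sub>M (lborel \<Otimes>\<^sub>M lborel))" for f :: "real \<times> real \<times> real \<Rightarrow> real"
      using that by (simp add: lborel_prod)
    have R_meas[measurable]: "R i \<in> borel_measurable M" if "i \<in> {1,2,3}" for i
      using ER(1)[OF that] by auto
    have ER11: "integrable M (\<lambda>w. R 1 w * R 1 w)" "(\<integral>w. R 1 w * R 1 w \<partial>M) = exp (2 * \<mu> 1 + 2 * (\<sigma> 1)\<^sup>2)"
    proof -
      have e: "R 1 w * R 1 w = exp (2 * \<mu> 1 + 2 * D 1 w)" for w
        by (simp add: R_def exp_add[symmetric] algebra_simps)
      show "integrable M (\<lambda>w. R 1 w * R 1 w)" "(\<integral>w. R 1 w * R 1 w \<partial>M) = exp (2 * \<mu> 1 + 2 * (\<sigma> 1)\<^sup>2)"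
        using lognormal[OF Ddist[of 1] sig(1), of "2 * \<mu> 1" 2] unfolding e by (simp_all add: power2_eq_square)
    qed
    have ERR: "integrable M (\<lambda>w. R i w * R j w)" "(\<integral>w. R i w * R j w \<partial>M) = exp (\<mu> i + (\<sigma> i)\<^sup>2 / 2) * exp (\<mu> j + (\<sigma> j)\<^sup>2 / 2)"
      if "i \<in> {1,2,3}" "j \<in> {1,2,3}" "i \<noteq> j" for i j
      using indep_var_integrable[OF iD[OF that] ER(1) ER(1)] indep_var_lebesgue_integral[OF iD[OF that] ER(1) ER(1)]
        ER(2) that by auto
    define H where "H = (\<lambda>w. (R 2 w - R 1 w) * (R 3 w - R 1 w))"
    have Hexp: "H w = R 2 w * R 3 w - R 1 w * R 3 w - R 1 w * R 2 w + R 1 w * R 1 w" for w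
      unfolding H_def by (simp add: algebra_simps)
    have intH: "integrable M H"
      unfolding Hexp[abs_def] using ERR[of 2 3] ERR[of 1 3] ERR[of 1 2] ER11 by auto
    have EH: "(\<integral>w. H w \<partial>M) = exp (\<mu> 2 + \<mu> 3 + (\<sigma> 2)\<^sup>2 / 2 + (\<sigma> 3)\<^sup>2 / 2)
             - exp (\<mu> 1 + \<mu> 3 + (\<sigma> 1)\<^sup>2 / 2 + (\<sigma> 3)\<^sup>2 / 2)
             - exp (\<mu> 1 + \<mu> 2 + (\<sigma> 1)\<^sup>2 / 2 + (\<sigma> 2)\<^sup>2 / 2)
             + exp (2 * \<mu> 1 + 2 * (\<sigma> 1)\<^sup>2)"
      unfolding Hexp[abs_def] using ERR[of 2 3] ERR[of 1 3] ERR[of 1 2] ER11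
      by (simp add: exp_add[symmetric] algebra_simps)
    have intR21: "integrable M (\<lambda>w. R 2 w - R 1 w)" using ER(1)[of 1] ER(1)[of 2] by auto
    have i1: "indep_var borel Ga borel (\<lambda>w. R 2 w - R 1 w)"
    proof -
      have "indep_var borel (\<lambda>w. (\<lambda>(u1, u2, u3). sgk k ((u2 - u1) / \<sigma>a)) (Us 1 w, Us 2 w, Us 3 w))
          borel (\<lambda>w. (\<lambda>(d1, d2, d3). exp (\<mu> 2 + d2) - exp (\<mu> 1 + d1)) (D 1 w, D 2 w, D 3 w))"
        by (rule iblock; rule tri; measurable)
      then show ?thesis by (simp add: Ga_def R_def)
    qed
    have i2: "indep_var borel (\<lambda>w. Ga w * Gb w) borel H"
    proof -
      have "indep_var borel (\<lambda>w. (\<lambda>(u1, u2, u3). sgk k ((u2 - u1) / \<sigma>a) * sgk k ((u3 - u1) / \<sigma>b)) (Us 1 w, Us 2 w, Us 3 w))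
          borel (\<lambda>w. (\<lambda>(d1, d2, d3). (exp (\<mu> 2 + d2) - exp (\<mu> 1 + d1)) * (exp (\<mu> 3 + d3) - exp (\<mu> 1 + d1))) (D 1 w, D 2 w, D 3 w))"
        by (rule iblock; rule tri; measurable)
      then show ?thesis by (simp add: Ga_def Gb_def R_def H_def)
    qed
    have Era: "(\<integral>w. Ga w * (R 2 w - R 1 w) \<partial>M) = 0"
      using indep_var_lebesgue_integral[OF i1 intGa(1) intR21] EGa by simp
    have Erarb: "(\<integral>w. Ga w * (R 2 w - R 1 w) * (Gb w * (R 3 w - R 1 w)) \<partial>M) = (\<integral>w. Ga w * Gb w \<partial>M) * (\<integral>w. H w \<partial>M)"
    proof -
      have "(\<integral>w. Ga w * (R 2 w - R 1 w) * (Gb w * (R 3 w - R 1 w)) \<partial>M) = (\<integral>w. (Ga w * Gb w) * H w \<partial>M)"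
        unfolding H_def by (simp add: mult_ac)
      also have "\<dots> = (\<integral>w. Ga w * Gb w \<partial>M) * (\<integral>w. H w \<partial>M)"
        by (rule indep_var_lebesgue_integral[OF i2 intGa(3) intH])
      finally show ?thesis .
    qed
    show ?thesis
      unfolding cov_def Era Erarb EGG EH \<rho>_def[symmetric] by simp
  qed
  show ?thesis
    unfolding Let_def
    apply (subst cov_cong[where f' = "\<lambda>w. Ga w * (R 2 w - R 1 w)" and g' = "\<lambda>w. Gb w * (R 3 w - R 1 w)"])
    subgoal for w using ret[of 2 w] ret[of 1 w] eps[of 2 w] \<sigma>ab
      by (simp add: Ga_def sig_eq \<sigma>a_def)
    subgoal for w using ret[of 3 w] ret[of 1 w] eps[of 3 w] \<sigma>ab
      by (simp add: Gb_def sig_eq \<sigma>b_def)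
    by (rule main)
qed
end
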